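(* Let $K<0$ and $d\ge 1$, and let $\mathbb{H}^d_K=\{\mathbf{x}\in\mathbb{R}^{d+1} : \langle \mathbf{x},\mathbf{x}\rangle_L = 1/K,\ x_0>0\}$, where $\langle \mathbf{x},\mathbf{y}\rangle_L=-x_0y_0+\sum_{i=1}^d x_iy_i$. Let $\mathbf{x}_1,\dots,\mathbf{x}_n\in\mathbb{H}^d_K$ with $n\ge 2$, let $\bar{\mathbf{x}}=\frac1n\sum_{i=1}^n \mathbf{x}_i$ be their Euclidean mean in $\mathbb{R}^{d+1}$, and let $\mathbf{m}^{\mathrm{Euc}}=\Pi_K(\bar{\mathbf{x}})$. Then $$ r(\mathbf{m}^{\mathrm{Euc}})\le \frac1n\sum_{i=1}^n r(\mathbf{x}_i),$$ with equality if and only if all the $\mathbf{x}_i$ are identical.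
   Context: For $\mathbf{v}\in\mathbb{R}^{d+1}$ with $\langle\mathbf{v},\mathbf{v}\rangle_L<0$ and $v_0>0$, the Lorentz projection is $\Pi_K(\mathbf{v})=\mathbf{v}/\sqrt{K\langle \mathbf{v},\mathbf{v}\rangle_L}$, the unique positive rescaling of $\mathbf{v}$ lying on $\mathbb{H}^d_K$. The radial depth of $\mathbf{x}\in\mathbb{H}^d_K$ is $r(\mathbf{x})=x_0$ (its $0$-th coordinate). *)

theory Defs
  imports Complex_Main
begin

text \<open>Points of R^(d+1) are represented as functions nat => real with coordinates
 0..d; coordinates beyond d are required to vanish for points of the hyperboloid.\<close>

definition lorentz_inner :: "nat \<Rightarrow> (nat \<Rightarrow> real) \<Rightarrow> (nat \<Rightarrow> real) \<Rightarrow> real" where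
  "lorentz_inner d x y = - x 0 * y 0 + (\<Sum>i=1..d. x i * y i)"

definition hyperboloid :: "real \<Rightarrow> nat \<Rightarrow> (nat \<Rightarrow> real) set" where
  "hyperboloid K d = {x. lorentz_inner d x x = 1 / K \<and> x 0 > 0 \<and> (\<forall>j>d. x j = 0)}"

definition lorentz_proj :: "real \<Rightarrow> nat \<Rightarrow> (nat \<Rightarrow> real) \<Rightarrow> (nat \<Rightarrow> real)" where
  "lorentz_proj K d v = (\<lambda>j. v j / sqrt (K * lorentz_inner d v v))"

definition radial_depth :: "(nat \<Rightarrow> real) \<Rightarrow> real" where
  "radial_depth x = x 0"

definition euclid_mean :: "nat \<Rightarrow> (nat \<Rightarrow> nat \<Rightarrow> real) \<Rightarrow> (nat \<Rightarrow> real)" where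
  "euclid_mean n x = (\<lambda>j. (\<Sum>i<n. x i j) / real n)"

end

theory Submission
  imports Defs "HOL-Analysis.Convex"
begin

lemma pair_ineq:
  assumes K: "K < 0" and hx: "x \<in> hyperboloid K d" and hy: "y \<in> hyperboloid K d"
  shows "- lorentz_inner d x y \<ge> - 1 / K"
    and "- lorentz_inner d x y = - 1 / K \<Longrightarrow> x = y"
proof -
  define c where "c = - 1 / K"
  have c: "c > 0" using K by (simp add: c_def)
  define A where "A = (\<Sum>i=1..d. x i ^ 2)"
  define B where "B = (\<Sum>i=1..d. y i ^ 2)"
  define S where "S = (\<Sum>i=1..d. x i * y i)"
  have x0: "x 0 > 0" and y0: "y 0 > 0" using hx hy by (auto simp: hyperboloid_def)
  have xe: "x 0 ^ 2 = A + c" using hx unfolding hyperboloid_def lorentz_inner_def A_def c_def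
    by (auto simp: power2_eq_square)
  have ye: "y 0 ^ 2 = B + c" using hy unfolding hyperboloid_def lorentz_inner_def B_def c_def
    by (auto simp: power2_eq_square)
  have li: "- lorentz_inner d x y = x 0 * y 0 - S" by (simp add: lorentz_inner_def S_def)
  have CS: "S^2 \<le> A * B" unfolding S_def A_def B_def by (rule Cauchy_Schwarz_ineq_sum)
  have D: "A + B - 2 * S = (\<Sum>i=1..d. (x i - y i)^2)"
    unfolding A_def B_def S_def by (simp add: power2_diff sum.distrib sum_subtractf sum_distrib_left mult.assoc)
  have Dnn: "A + B - 2 * S \<ge> 0" unfolding D by (simp add: sum_nonneg)
  have sq: "(x 0 * y 0)^2 = (c + S)^2 + (A*B - S^2) + c * (A + B - 2*S)"
  proof -
    have "(x 0 * y 0)^2 = (A + c) * (B + c)" by (simp add: power_mult_distrib xe ye)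
    then show ?thesis by (simp add: algebra_simps power2_eq_square)
  qed
  have "c * (A + B - 2*S) \<ge> 0" using Dnn c by simp
  then have sqge: "(x 0 * y 0)^2 \<ge> (c + S)^2" using sq CS by linarith
  have main: "x 0 * y 0 \<ge> c + S"
  proof (cases "c + S \<le> 0")
    case True then show ?thesis using x0 y0 by (smt (verit) mult_pos_pos)
  next
    case False
    have "0 \<le> x 0 * y 0" using x0 y0 by simp
    with sqge show ?thesis by (rule power2_le_imp_le)
  qed
  then show "- lorentz_inner d x y \<ge> - 1 / K" using li c_def by simp
  assume eq: "- lorentz_inner d x y = - 1 / K"
  then have e: "x 0 * y 0 = c + S" using li c_def by simp
  then have "(A*B - S^2) + c * (A + B - 2*S) = 0" using sq by simp
  moreover have "c * (A + B - 2*S) \<ge> 0" using Dnn c by simp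
  ultimately have "c * (A + B - 2*S) = 0" using CS by linarith
  then have "(\<Sum>i=1..d. (x i - y i)^2) = 0" using c D by simp
  then have eqi: "\<forall>i\<in>{1..d}. (x i - y i)^2 = 0"
    by (subst sum_nonneg_eq_0_iff[symmetric]) auto
  then have "\<forall>i\<in>{1..d}. x i = y i" by simp
  then have "A = B" unfolding A_def B_def by simp
  then have "x 0 ^ 2 = y 0 ^ 2" using xe ye by simp
  then have "x 0 = y 0" using x0 y0 by (simp add: power2_eq_iff)
  moreover have "\<forall>j>d. x j = 0 \<and> y j = 0" using hx hy by (auto simp: hyperboloid_def)
  ultimately show "x = y" using \<open>\<forall>i\<in>{1..d}. x i = y i\<close>
    by (metis atLeastAtMost_iff ext le_less_linear less_one not_le_imp_less)
qed

lemma inner_sum: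
  "lorentz_inner d (\<lambda>j. \<Sum>i<n. x i j) (\<lambda>j. \<Sum>i<n. x i j)
     = (\<Sum>i<n. \<Sum>k<n. lorentz_inner d (x i) (x k))"
proof -
  have a: "(\<Sum>j=1..d. (\<Sum>i<n. x i j) * (\<Sum>k<n. x k j)) = (\<Sum>i<n. \<Sum>k<n. \<Sum>j=1..d. x i j * x k j)"
  proof -
    have "(\<Sum>j=1..d. (\<Sum>i<n. x i j) * (\<Sum>k<n. x k j)) = (\<Sum>j=1..d. \<Sum>i<n. \<Sum>k<n. x i j * x k j)"
      by (simp add: sum_product)
    also have "\<dots> = (\<Sum>i<n. \<Sum>j=1..d. \<Sum>k<n. x i j * x k j)" by (rule sum.swap)
    also have "\<dots> = (\<Sum>i<n. \<Sum>k<n. \<Sum>j=1..d. x i j * x k j)" by (rule sum.cong[OF refl], rule sum.swap)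
    finally show ?thesis .
  qed
  have b: "(\<Sum>i<n. x i 0) * (\<Sum>k<n. x k 0) = (\<Sum>i<n. \<Sum>k<n. x i 0 * x k 0)"
    by (simp add: sum_product)
  show ?thesis unfolding lorentz_inner_def a
    by (simp add: b sum.distrib sum_negf sum_subtractf)
qed

theorem proposition4p3:
  fixes K :: real and d n :: nat and x :: "nat \<Rightarrow> nat \<Rightarrow> real"
  assumes "K < 0" and "d \<ge> 1" and "n \<ge> 2"
    and "\<forall>i<n. x i \<in> hyperboloid K d"
  shows "radial_depth (lorentz_proj K d (euclid_mean n x))
           \<le> (\<Sum>i<n. radial_depth (x i)) / real n
    \<and> (radial_depth (lorentz_proj K d (euclid_mean n x))
           = (\<Sum>i<n. radial_depth (x i)) / real n
       \<longleftrightarrow> (\<forall>i<n. \<forall>j<n. x i = x j))"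
proof -
  define s where "s = (\<lambda>j. \<Sum>i<n. x i j)"
  define v where "v = euclid_mean n x"
  have nr: "real n > 0" using assms(3) by simp
  have v: "v = (\<lambda>j. s j / real n)" by (simp add: v_def s_def euclid_mean_def)
  have vv: "lorentz_inner d v v = lorentz_inner d s s / (real n)^2"
  proof -
    have "(\<Sum>i=1..d. s i / real n * (s i / real n)) = (\<Sum>i=1..d. s i * s i) / (real n)^2"
      by (simp add: sum_divide_distrib power2_eq_square)
    then show ?thesis unfolding v lorentz_inner_def by (simp add: power2_eq_square diff_divide_distrib add_divide_distrib)
  qed
  define T where "T = (\<Sum>i<n. \<Sum>k<n. (- lorentz_inner d (x i) (x k) - (- 1 / K)))"
  have Tnn: "\<forall>i<n. \<forall>k<n. - lorentz_inner d (x i) (x k) - (- 1 / K) \<ge> 0"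
    using pair_ineq(1)[OF assms(1)] assms(4) by simp
  have T0: "T \<ge> 0" unfolding T_def by (intro sum_nonneg) (use Tnn in auto)
  have ss: "- lorentz_inner d s s = T + real n ^ 2 * (- 1 / K)"
    unfolding s_def inner_sum T_def by (simp add: sum_subtractf sum_negf power2_eq_square)
  define q where "q = K * lorentz_inner d v v"
  have q: "q = 1 + (- K) * T / (real n)^2"
  proof -
    have l: "lorentz_inner d s s = (real n)^2 / K - T" using ss by simp
    have k: "K * lorentz_inner d s s = (real n)^2 - K * T" unfolding l using assms(1)
      by (simp add: right_diff_distrib)
    have "q = ((real n)^2 - K * T) / (real n)^2" unfolding q_def vv using k by simp
    then show ?thesis using nr by (simp add: field_simps)
  qed
  have "(- K) * T / (real n)^2 \<ge> 0" using T0 assms(1) by (intro divide_nonneg_nonneg mult_nonneg_nonneg) auto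
  then have q1: "q \<ge> 1" using q by linarith
  have v0: "v 0 > 0"
  proof -
    have "s 0 > 0" unfolding s_def
      using assms(4) assms(3) by (intro sum_pos) (auto simp: hyperboloid_def lessThan_empty_iff)
    then show ?thesis using v nr by simp
  qed
  have r: "radial_depth (lorentz_proj K d v) = v 0 / sqrt q"
    by (simp add: radial_depth_def lorentz_proj_def q_def)
  have mean: "(\<Sum>i<n. radial_depth (x i)) / real n = v 0"
    by (simp add: v s_def radial_depth_def)
  have sq1: "sqrt q \<ge> 1" using q1 by simp
  have le: "v 0 / sqrt q \<le> v 0" using sq1 v0
    by (simp add: divide_le_eq)
  have iff1: "v 0 / sqrt q = v 0 \<longleftrightarrow> T = 0"
  proof
    assume "v 0 / sqrt q = v 0"
    then have "sqrt q = 1" using v0 sq1 by (simp add: divide_eq_eq)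
    then have "q = 1" by simp
    then show "T = 0" using q assms(1) nr by simp
  next
    assume "T = 0" then have "q = 1" using q by simp
    then show "v 0 / sqrt q = v 0" by simp
  qed
  have iff2: "T = 0 \<longleftrightarrow> (\<forall>i<n. \<forall>j<n. x i = x j)"
  proof
    assume T00: "T = 0"
    define f where "f = (\<lambda>i k. - lorentz_inner d (x i) (x k) - (- 1 / K))"
    have fnn: "\<And>i k. i < n \<Longrightarrow> k < n \<Longrightarrow> f i k \<ge> 0" using Tnn f_def by simp
    have Tf: "(\<Sum>i<n. \<Sum>k<n. f i k) = 0" using T00 unfolding T_def f_def .
    have rnn: "\<And>i. i \<in> {..<n} \<Longrightarrow> (\<Sum>k<n. f i k) \<ge> 0"
      by (rule sum_nonneg) (use fnn in auto)
    have r0: "\<forall>i\<in>{..<n}. (\<Sum>k<n. f i k) = 0"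
      using sum_nonneg_eq_0_iff[of "{..<n}" "\<lambda>i. \<Sum>k<n. f i k"] rnn Tf by simp
    have "\<forall>i<n. \<forall>k<n. f i k = 0"
    proof (intro allI impI)
      fix i k assume i: "i < n" and k: "k < n"
      have "(\<Sum>k<n. f i k) = 0" using r0 i by simp
      then have "\<forall>k\<in>{..<n}. f i k = 0"
        using sum_nonneg_eq_0_iff[of "{..<n}" "f i"] fnn i by simp
      then show "f i k = 0" using k by simp
    qed
    then show "\<forall>i<n. \<forall>j<n. x i = x j"
    proof (intro allI impI)
      fix i j assume h0: "\<forall>i<n. \<forall>k<n. f i k = 0" and i: "i < n" and j: "j < n"
      have "f i j = 0" using h0 i j by blast
      then have "- lorentz_inner d (x i) (x j) - (- 1 / K) = 0" by (simp only: f_def)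
      then have "- lorentz_inner d (x i) (x j) = - 1 / K" by linarith
      moreover have hi: "x i \<in> hyperboloid K d" using assms(4) i by simp
      moreover have hj: "x j \<in> hyperboloid K d" using assms(4) j by simp
      ultimately show "x i = x j" using pair_ineq(2)[OF assms(1)] by metis
    qed
  next
    assume h: "\<forall>i<n. \<forall>j<n. x i = x j"
    have "\<forall>i<n. \<forall>k<n. - lorentz_inner d (x i) (x k) - (- 1 / K) = 0"
    proof (intro allI impI)
      fix i k assume i: "i < n" and k: "k < n"
      have "x k = x i" using h i k by blast
      moreover have "lorentz_inner d (x i) (x i) = 1 / K"
        using assms(4) i unfolding hyperboloid_def by blast
      ultimately show "- lorentz_inner d (x i) (x k) - (- 1 / K) = 0" by simp
    qed
    then have "\<forall>i\<in>{..<n}. \<forall>k\<in>{..<n}. - lorentz_inner d (x i) (x k) - (- 1 / K) = 0"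
      by blast
    then show "T = 0" unfolding T_def by (intro sum.neutral ballI) blast
  qed
  show ?thesis using le iff1 iff2 r mean v_def by simp
qed

end
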